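(* Let $G$, $\rho'$, $\chi$, $d$, $v_1,v_2$, $\Phi_1,\Phi_2$, $V_1,V_2\subseteq L^2(G)$ and the $G$-linear unitary map $M:V_1\to V_2$ (extended by $0$ on $V_1^\perp$) be as follows: $G$ is a finite group, $\rho':G\to \mathrm{U}(\mathcal{H})$ is an irreducible unitary representation on a $d$-dimensional complex Hilbert space with character $\chi$, $v_1,v_2\in\mathcal{H}$ are nonzero, $\Phi_i=(\rho'(g)v_i)_{g\in G}$, and $V_i$ is the column space of the Gram matrix of $\Phi_i$. Let $\Pi_{V_i}$ denote the orthogonal projection of $L^2(G)$ onto $V_i$. For $a\in G$ let $\chi_a(g)=\chi(ga)$ and $A_{\chi,a}f=f*\overline{\chi_a}$ for $f\in L^2(G)$. Then for every $a\in G$ there is $\lambda_a\in\mathbb{C}$ such that $$\lambda_a Mf=\Pi_{V_2}A_{\chi,a}\Pi_{V_1}f\quad\text{for all }f\in L^2(G),$$ and $\lambda_a\neq 0$ for at least one $a\in G$.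
   Context: $L^2(G)$ is the space of functions $G\to\mathbb{C}$ with convolution $(f*h)(s)=\sum_{x\in G}f(x)h(x^{-1}s)$ and left regular representation $\rho(g)f=\delta_g*f$. The Gram matrix of $\Phi_i$ is $[\langle\rho'(g_2)v_i,\rho'(g_1)v_i\rangle]_{g_1,g_2\in G}$; its column space $V_i$ is invariant and irreducible under the left regular representation with character $\chi$. $M$ is $G$-linear: it commutes with $\rho(g)$ for all $g$. *)

theory Defs
  imports "HOL-Algebra.Group" "Jordan_Normal_Form.Schur_Decomposition"
begin

(* Unitary representation of a finite group G (HOL-Algebra) on the d-dimensional
   complex Hilbert space C^d, with inner product  <x,y> = x \<bullet>c y  (linear in x). *)
definition unitary_rep :: "('a, 'b) monoid_scheme \<Rightarrow> nat \<Rightarrow> ('a \<Rightarrow> complex mat) \<Rightarrow> bool" where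
  "unitary_rep G d \<rho> \<longleftrightarrow>
     (\<forall>g\<in>carrier G. \<rho> g \<in> carrier_mat d d \<and> mat_adjoint (\<rho> g) * \<rho> g = 1\<^sub>m d) \<and>
     (\<forall>g\<in>carrier G. \<forall>h\<in>carrier G. \<rho> (g \<otimes>\<^bsub>G\<^esub> h) = \<rho> g * \<rho> h)"

definition csubspace_vec :: "nat \<Rightarrow> complex vec set \<Rightarrow> bool" where
  "csubspace_vec d W \<longleftrightarrow> W \<subseteq> carrier_vec d \<and> 0\<^sub>v d \<in> W \<and>
     (\<forall>x\<in>W. \<forall>y\<in>W. x + y \<in> W) \<and> (\<forall>c. \<forall>x\<in>W. c \<cdot>\<^sub>v x \<in> W)"

definition irreducible_rep :: "('a, 'b) monoid_scheme \<Rightarrow> nat \<Rightarrow> ('a \<Rightarrow> complex mat) \<Rightarrow> bool" where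
  "irreducible_rep G d \<rho> \<longleftrightarrow> d > 0 \<and>
     (\<forall>W. csubspace_vec d W \<and> (\<forall>g\<in>carrier G. \<forall>w\<in>W. \<rho> g *\<^sub>v w \<in> W)
          \<longrightarrow> W = {0\<^sub>v d} \<or> W = carrier_vec d)"

definition character :: "nat \<Rightarrow> ('a \<Rightarrow> complex mat) \<Rightarrow> 'a \<Rightarrow> complex" where
  "character d \<rho> g = (\<Sum>i<d. \<rho> g $$ (i, i))"

definition L2 :: "('a, 'b) monoid_scheme \<Rightarrow> ('a \<Rightarrow> complex) set" where
  "L2 G = {f. \<forall>x. x \<notin> carrier G \<longrightarrow> f x = 0}"

definition l2_inner :: "('a, 'b) monoid_scheme \<Rightarrow> ('a \<Rightarrow> complex) \<Rightarrow> ('a \<Rightarrow> complex) \<Rightarrow> complex" where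
  "l2_inner G f h = (\<Sum>x\<in>carrier G. f x * cnj (h x))"

definition conv :: "('a, 'b) monoid_scheme \<Rightarrow> ('a \<Rightarrow> complex) \<Rightarrow> ('a \<Rightarrow> complex) \<Rightarrow> 'a \<Rightarrow> complex" where
  "conv G f h s = (if s \<in> carrier G then
      (\<Sum>x\<in>carrier G. f x * h (inv\<^bsub>G\<^esub> x \<otimes>\<^bsub>G\<^esub> s)) else 0)"

definition delta :: "('a, 'b) monoid_scheme \<Rightarrow> 'a \<Rightarrow> 'a \<Rightarrow> complex" where
  "delta G g x = (if x = g \<and> x \<in> carrier G then 1 else 0)"

definition left_reg :: "('a, 'b) monoid_scheme \<Rightarrow> 'a \<Rightarrow> ('a \<Rightarrow> complex) \<Rightarrow> 'a \<Rightarrow> complex" where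
  "left_reg G g f = conv G (delta G g) f"

definition gram :: "('a \<Rightarrow> complex mat) \<Rightarrow> complex vec \<Rightarrow> 'a \<Rightarrow> 'a \<Rightarrow> complex" where
  "gram \<rho> v g1 g2 = (\<rho> g2 *\<^sub>v v) \<bullet>c (\<rho> g1 *\<^sub>v v)"

definition gram_colspace :: "('a, 'b) monoid_scheme \<Rightarrow> ('a \<Rightarrow> complex mat) \<Rightarrow> complex vec \<Rightarrow> ('a \<Rightarrow> complex) set" where
  "gram_colspace G \<rho> v = {f. \<exists>c :: 'a \<Rightarrow> complex. \<forall>g1.
      f g1 = (if g1 \<in> carrier G then (\<Sum>g2\<in>carrier G. gram \<rho> v g1 g2 * c g2) else 0)}"

definition orth_proj :: "('a, 'b) monoid_scheme \<Rightarrow> ('a \<Rightarrow> complex) set \<Rightarrow> ('a \<Rightarrow> complex) \<Rightarrow> 'a \<Rightarrow> complex" where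
  "orth_proj G V f = (THE p. p \<in> V \<and> (\<forall>w\<in>V. l2_inner G (\<lambda>x. f x - p x) w = 0))"

definition A_op :: "('a, 'b) monoid_scheme \<Rightarrow> ('a \<Rightarrow> complex) \<Rightarrow> 'a \<Rightarrow> ('a \<Rightarrow> complex) \<Rightarrow> 'a \<Rightarrow> complex" where
  "A_op G \<chi> a f = conv G f (\<lambda>g. cnj (\<chi> (g \<otimes>\<^bsub>G\<^esub> a)))"

end

theory Submission
  imports Defs "Jordan_Normal_Form.Spectral_Radius"
begin


locale urep =
  fixes G :: "('a, 'b) monoid_scheme" (structure) and d :: nat and R :: "'a \<Rightarrow> complex mat"
  assumes grp: "group G" and fin: "finite (carrier G)"
    and rep: "unitary_rep G d R" and irr: "irreducible_rep G d R"
begin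

lemma Rc: "g \<in> carrier G \<Longrightarrow> R g \<in> carrier_mat d d"
  using rep unfolding unitary_rep_def by auto
lemma Rmul: "g \<in> carrier G \<Longrightarrow> h \<in> carrier G \<Longrightarrow> R (g \<otimes>\<^bsub>G\<^esub> h) = R g * R h"
  using rep unfolding unitary_rep_def by auto
lemma Radj: "g \<in> carrier G \<Longrightarrow> mat_adjoint (R g) * R g = 1\<^sub>m d"
  using rep unfolding unitary_rep_def by auto
lemma adjc: "A \<in> carrier_mat d d \<Longrightarrow> mat_adjoint A \<in> carrier_mat d d"
  unfolding mat_adjoint_def by auto
lemma Radj2: "g \<in> carrier G \<Longrightarrow> R g * mat_adjoint (R g) = 1\<^sub>m d"
  using mat_mult_left_right_inverse[OF adjc[OF Rc] Rc Radj] by auto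

lemma R1: "R \<one>\<^bsub>G\<^esub> = 1\<^sub>m d"
proof -
  interpret group G by (rule grp)
  have o: "\<one> \<in> carrier G" by simp
  have "R \<one> = R \<one> * R \<one>" using Rmul[OF o o] by simp
  hence "mat_adjoint (R \<one>) * R \<one> = mat_adjoint (R \<one>) * (R \<one> * R \<one>)" by simp
  also have "\<dots> = (mat_adjoint (R \<one>) * R \<one>) * R \<one>"
    using assoc_mult_mat[OF adjc[OF Rc[OF o]] Rc[OF o] Rc[OF o]] by simp
  finally show ?thesis using Radj[OF o] Rc[OF o] by simp
qed

lemma Rinv: "g \<in> carrier G \<Longrightarrow> R (inv\<^bsub>G\<^esub> g) = mat_adjoint (R g)"
proof -
  interpret group G by (rule grp)
  assume g: "g \<in> carrier G"
  have gi: "inv g \<in> carrier G" using g by simp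
  have "R g * R (inv g) = 1\<^sub>m d" using Rmul[OF g gi] R1 g by simp
  hence "mat_adjoint (R g) * (R g * R (inv g)) = mat_adjoint (R g)"
    using adjc[OF Rc[OF g]] by simp
  moreover have "mat_adjoint (R g) * (R g * R (inv g)) = (mat_adjoint (R g) * R g) * R (inv g)"
    using assoc_mult_mat[OF adjc[OF Rc[OF g]] Rc[OF g] Rc[OF gi]] by simp
  ultimately show ?thesis using Radj[OF g] Rc[OF gi] by simp
qed

lemma adj_entry: "A \<in> carrier_mat d d \<Longrightarrow> i < d \<Longrightarrow> j < d \<Longrightarrow> mat_adjoint A $$ (i,j) = cnj (A $$ (j,i))"
  unfolding mat_adjoint_def by (auto simp: mat_of_rows_def)

lemma inner_adj: assumes A: "A \<in> carrier_mat d d" and u: "(u::complex vec) \<in> carrier_vec d" and z: "z \<in> carrier_vec d"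
  shows "(A *\<^sub>v u) \<bullet>c z = u \<bullet>c (mat_adjoint A *\<^sub>v z)"
proof -
  have AA: "mat_adjoint A \<in> carrier_mat d d" using adjc[OF A] .
  have e1: "\<And>i. i < d \<Longrightarrow> (A *\<^sub>v u) $ i = (\<Sum>j<d. A $$ (i,j) * u $ j)"
    using A u by (simp add: scalar_prod_def lessThan_atLeast0)
  have e2: "\<And>j. j < d \<Longrightarrow> (mat_adjoint A *\<^sub>v z) $ j = (\<Sum>i<d. cnj (A $$ (i,j)) * z $ i)"
    using AA z A by (simp add: scalar_prod_def lessThan_atLeast0 adj_entry)
  have "(A *\<^sub>v u) \<bullet>c z = (\<Sum>i<d. (A *\<^sub>v u) $ i * cnj (z $ i))"
    using A u z by (simp add: scalar_prod_def lessThan_atLeast0)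
  also have "\<dots> = (\<Sum>i<d. (\<Sum>j<d. A $$ (i,j) * u $ j) * cnj (z $ i))"
    using e1 by simp
  also have "\<dots> = (\<Sum>i<d. \<Sum>j<d. A $$ (i,j) * u $ j * cnj (z $ i))"
    by (simp add: sum_distrib_right)
  also have "\<dots> = (\<Sum>j<d. \<Sum>i<d. A $$ (i,j) * u $ j * cnj (z $ i))"
    by (rule sum.swap)
  also have "\<dots> = (\<Sum>j<d. u $ j * cnj (\<Sum>i<d. cnj (A $$ (i,j)) * z $ i))"
    by (simp add: sum_distrib_left mult_ac)
  also have "\<dots> = (\<Sum>j<d. u $ j * cnj ((mat_adjoint A *\<^sub>v z) $ j))"
    using e2 by simp
  also have "\<dots> = u \<bullet>c (mat_adjoint A *\<^sub>v z)"
    using AA u z by (simp add: scalar_prod_def lessThan_atLeast0)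
  finally show ?thesis .
qed

end



context urep begin

lemma dpos: "d > 0" using irr unfolding irreducible_rep_def by auto

lemma schur:
  assumes C: "C \<in> carrier_mat d d"
    and comm: "\<And>g w. g \<in> carrier G \<Longrightarrow> w \<in> carrier_vec d \<Longrightarrow> C *\<^sub>v (R g *\<^sub>v w) = R g *\<^sub>v (C *\<^sub>v w)"
  shows "\<exists>c. \<forall>w\<in>carrier_vec d. C *\<^sub>v w = c \<cdot>\<^sub>v w"
proof -
  from spectrum_non_empty[OF C dpos] obtain c where "eigenvalue C c" unfolding spectrum_def by auto
  then obtain v where v: "v \<in> carrier_vec d" "v \<noteq> 0\<^sub>v d" "C *\<^sub>v v = c \<cdot>\<^sub>v v"
    unfolding eigenvalue_def eigenvector_def using C by auto
  define W where "W = {w \<in> carrier_vec d. C *\<^sub>v w = c \<cdot>\<^sub>v w}"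
  have sub: "csubspace_vec d W" unfolding csubspace_vec_def W_def
  proof (intro conjI ballI allI)
    show "{w \<in> carrier_vec d. C *\<^sub>v w = c \<cdot>\<^sub>v w} \<subseteq> carrier_vec d" by auto
    show "0\<^sub>v d \<in> {w \<in> carrier_vec d. C *\<^sub>v w = c \<cdot>\<^sub>v w}" using C by (auto intro!: eq_vecI)
    fix x y assume x: "x \<in> {w \<in> carrier_vec d. C *\<^sub>v w = c \<cdot>\<^sub>v w}" and y: "y \<in> {w \<in> carrier_vec d. C *\<^sub>v w = c \<cdot>\<^sub>v w}"
    thus "x + y \<in> {w \<in> carrier_vec d. C *\<^sub>v w = c \<cdot>\<^sub>v w}"
      using C by (auto simp: mult_add_distrib_mat_vec smult_add_distrib_vec)
  next
    fix k x assume x: "x \<in> {w \<in> carrier_vec d. C *\<^sub>v w = c \<cdot>\<^sub>v w}"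
    thus "k \<cdot>\<^sub>v x \<in> {w \<in> carrier_vec d. C *\<^sub>v w = c \<cdot>\<^sub>v w}"
      using C by (auto simp: mult_mat_vec smult_smult_assoc mult.commute)
  qed
  have inv: "\<forall>g\<in>carrier G. \<forall>w\<in>W. R g *\<^sub>v w \<in> W"
  proof (intro ballI)
    fix g w assume g: "g \<in> carrier G" and w: "w \<in> W"
    have "C *\<^sub>v (R g *\<^sub>v w) = c \<cdot>\<^sub>v (R g *\<^sub>v w)"
      using comm[OF g] w Rc[OF g] unfolding W_def by (auto simp: mult_mat_vec)
    thus "R g *\<^sub>v w \<in> W" using Rc[OF g] w unfolding W_def by auto
  qed
  have "W = {0\<^sub>v d} \<or> W = carrier_vec d" using irr sub inv unfolding irreducible_rep_def by blast
  moreover have "v \<in> W" using v unfolding W_def by auto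
  ultimately have "W = carrier_vec d" using v by auto
  thus ?thesis unfolding W_def by auto
qed

lemma cinner_sym: "(u::complex vec) \<in> carrier_vec d \<Longrightarrow> z \<in> carrier_vec d \<Longrightarrow> u \<bullet>c z = cnj (z \<bullet>c u)"
  by (simp add: scalar_prod_def mult.commute)

lemma inner_smult_left: "(u::complex vec) \<in> carrier_vec d \<Longrightarrow> z \<in> carrier_vec d \<Longrightarrow> (a \<cdot>\<^sub>v u) \<bullet>c z = a * (u \<bullet>c z)"
  by (simp add: scalar_prod_def sum_distrib_left mult.assoc)

lemma inner_smult_right: "(u::complex vec) \<in> carrier_vec d \<Longrightarrow> z \<in> carrier_vec d \<Longrightarrow> u \<bullet>c (a \<cdot>\<^sub>v z) = cnj a * (u \<bullet>c z)"
  by (simp add: scalar_prod_def sum_distrib_left mult_ac)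

lemma inner_vsum_left:
  fixes a :: "'x \<Rightarrow> complex"
  assumes b: "\<And>y. y \<in> Y \<Longrightarrow> (b y :: complex vec) \<in> carrier_vec d" and z: "z \<in> carrier_vec d"
  shows "vec d (\<lambda>j. \<Sum>y\<in>Y. a y * b y $ j) \<bullet>c z = (\<Sum>y\<in>Y. a y * (b y \<bullet>c z))"
proof -
  have "vec d (\<lambda>j. \<Sum>y\<in>Y. a y * b y $ j) \<bullet>c z = (\<Sum>j<d. \<Sum>y\<in>Y. a y * b y $ j * cnj (z $ j))"
    using z by (simp add: scalar_prod_def lessThan_atLeast0 sum_distrib_right)
  also have "\<dots> = (\<Sum>y\<in>Y. \<Sum>j<d. a y * b y $ j * cnj (z $ j))" by (rule sum.swap)
  also have "\<dots> = (\<Sum>y\<in>Y. a y * (b y \<bullet>c z))"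
    using b z by (intro sum.cong) (auto simp: scalar_prod_def lessThan_atLeast0 sum_distrib_left mult.assoc)
  finally show ?thesis .
qed

lemma matvec_vsum:
  fixes A :: "complex mat" and a :: "'x \<Rightarrow> complex"
  assumes A: "A \<in> carrier_mat d d" and i: "i < d" and b: "\<And>y. y \<in> Y \<Longrightarrow> b y \<in> carrier_vec d"
  shows "(A *\<^sub>v vec d (\<lambda>j. \<Sum>y\<in>Y. a y * b y $ j)) $ i = (\<Sum>y\<in>Y. a y * (A *\<^sub>v b y) $ i)"
proof -
  have "(A *\<^sub>v vec d (\<lambda>j. \<Sum>y\<in>Y. a y * b y $ j)) $ i = (\<Sum>j<d. A $$ (i,j) * (\<Sum>y\<in>Y. a y * b y $ j))"
    using A i by (simp add: scalar_prod_def lessThan_atLeast0)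
  also have "\<dots> = (\<Sum>j<d. \<Sum>y\<in>Y. a y * (A $$ (i,j) * b y $ j))" unfolding sum_distrib_left by (intro sum.cong refl) (simp add: algebra_simps)
  also have "\<dots> = (\<Sum>y\<in>Y. \<Sum>j<d. a y * (A $$ (i,j) * b y $ j))" by (rule sum.swap)
  also have "\<dots> = (\<Sum>y\<in>Y. a y * (A *\<^sub>v b y) $ i)"
  proof (rule sum.cong[OF refl])
    fix y assume y: "y \<in> Y"
    have bd: "dim_vec (b y) = d" using b[OF y] by auto
    show "(\<Sum>j<d. a y * (A $$ (i,j) * b y $ j)) = a y * (A *\<^sub>v b y) $ i"
      using A i bd by (auto simp: scalar_prod_def lessThan_atLeast0 sum_distrib_left intro!: sum.cong)
  qed
  finally show ?thesis .
qed

lemma sum_lmult: assumes g: "g \<in> carrier G"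
  shows "(\<Sum>x\<in>carrier G. f (g \<otimes> x)) = (\<Sum>x\<in>carrier G. f x)"
proof -
  interpret group G by (rule grp)
  have "bij_betw (\<lambda>x. g \<otimes> x) (carrier G) (carrier G)"
    by (rule bij_betw_byWitness[where f'="\<lambda>x. inv g \<otimes> x"]) (use g in \<open>auto simp: m_assoc[symmetric]\<close>)
  thus ?thesis by (rule sum.reindex_bij_betw)
qed

lemma sum_inv: "(\<Sum>x\<in>carrier G. f (inv x)) = (\<Sum>x\<in>carrier G. f x)"
proof -
  interpret group G by (rule grp)
  have "bij_betw (\<lambda>x. inv x) (carrier G) (carrier G)"
    by (rule bij_betw_byWitness[where f'="\<lambda>x. inv x"]) auto
  thus ?thesis by (rule sum.reindex_bij_betw)
qed

lemma Rv[simp]: "x \<in> carrier G \<Longrightarrow> (u::complex vec) \<in> carrier_vec d \<Longrightarrow> R x *\<^sub>v u \<in> carrier_vec d"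
  using Rc by (metis mult_mat_vec_carrier)
lemma Rdim[simp]: "x \<in> carrier G \<Longrightarrow> dim_row (R x) = d" "x \<in> carrier G \<Longrightarrow> dim_col (R x) = d"
  using Rc by auto

definition S :: "complex vec \<Rightarrow> complex vec \<Rightarrow> complex vec \<Rightarrow> complex vec" where
  "S u v w = vec d (\<lambda>i. \<Sum>x\<in>carrier G. (w \<bullet>c (R x *\<^sub>v v)) * (R x *\<^sub>v u) $ i)"

lemma S_carrier[simp]: "S u v w \<in> carrier_vec d" unfolding S_def by simp

lemma S_inner: "u \<in> carrier_vec d \<Longrightarrow> z \<in> carrier_vec d \<Longrightarrow>
  S u v w \<bullet>c z = (\<Sum>x\<in>carrier G. (w \<bullet>c (R x *\<^sub>v v)) * ((R x *\<^sub>v u) \<bullet>c z))"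
  unfolding S_def by (rule inner_vsum_left) (use Rc in auto)

definition SM :: "complex vec \<Rightarrow> complex vec \<Rightarrow> complex mat" where
  "SM u v = mat d d (\<lambda>(i,j). \<Sum>x\<in>carrier G. cnj ((R x *\<^sub>v v) $ j) * (R x *\<^sub>v u) $ i)"

lemma SM_S: assumes w: "w \<in> carrier_vec d" shows "SM u v *\<^sub>v w = S u v w"
proof (rule eq_vecI)
  show "dim_vec (SM u v *\<^sub>v w) = dim_vec (S u v w)" unfolding SM_def S_def by simp
  fix i assume "i < dim_vec (S u v w)"
  hence i: "i < d" unfolding S_def by simp
  have "(SM u v *\<^sub>v w) $ i = (\<Sum>j<d. (\<Sum>x\<in>carrier G. cnj ((R x *\<^sub>v v) $ j) * (R x *\<^sub>v u) $ i) * w $ j)"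
    using i w unfolding SM_def by (simp add: scalar_prod_def lessThan_atLeast0)
  also have "\<dots> = (\<Sum>j<d. \<Sum>x\<in>carrier G. w $ j * cnj ((R x *\<^sub>v v) $ j) * (R x *\<^sub>v u) $ i)"
    unfolding sum_distrib_right by (intro sum.cong refl) (simp add: algebra_simps)
  also have "\<dots> = (\<Sum>x\<in>carrier G. \<Sum>j<d. w $ j * cnj ((R x *\<^sub>v v) $ j) * (R x *\<^sub>v u) $ i)"
    by (rule sum.swap)
  also have "\<dots> = S u v w $ i"
    using i w Rc unfolding S_def by (auto simp: scalar_prod_def lessThan_atLeast0 sum_distrib_right intro!: sum.cong)
  finally show "(SM u v *\<^sub>v w) $ i = S u v w $ i" .
qed

lemma S_comm: assumes g: "g \<in> carrier G" and w: "w \<in> carrier_vec d" and u: "u \<in> carrier_vec d" and v: "v \<in> carrier_vec d"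
  shows "S u v (R g *\<^sub>v w) = R g *\<^sub>v S u v w"
proof (rule eq_vecI)
  interpret group G by (rule grp)
  show "dim_vec (S u v (R g *\<^sub>v w)) = dim_vec (R g *\<^sub>v S u v w)" using Rc[OF g] unfolding S_def by simp
  fix i assume "i < dim_vec (R g *\<^sub>v S u v w)"
  hence i: "i < d" using Rc[OF g] by simp
  have gi: "inv g \<in> carrier G" using g by simp
  have "S u v (R g *\<^sub>v w) $ i = (\<Sum>x\<in>carrier G. ((R g *\<^sub>v w) \<bullet>c (R x *\<^sub>v v)) * (R x *\<^sub>v u) $ i)"
    using i unfolding S_def by simp
  also have "\<dots> = (\<Sum>x\<in>carrier G. (w \<bullet>c (R (inv g \<otimes> x) *\<^sub>v v)) * (R x *\<^sub>v u) $ i)"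
  proof (rule sum.cong[OF refl])
    fix x assume x: "x \<in> carrier G"
    have "(R g *\<^sub>v w) \<bullet>c (R x *\<^sub>v v) = w \<bullet>c (mat_adjoint (R g) *\<^sub>v (R x *\<^sub>v v))"
      by (rule inner_adj) (use Rc g x w v in auto)
    also have "\<dots> = w \<bullet>c (R (inv g \<otimes> x) *\<^sub>v v)"
      using Rinv[OF g] Rmul[OF gi x] Rc[OF gi] Rc[OF x] v by simp
    finally show "((R g *\<^sub>v w) \<bullet>c (R x *\<^sub>v v)) * (R x *\<^sub>v u) $ i = (w \<bullet>c (R (inv g \<otimes> x) *\<^sub>v v)) * (R x *\<^sub>v u) $ i" by simp
  qed
  also have "\<dots> = (\<Sum>y\<in>carrier G. (w \<bullet>c (R (inv g \<otimes> (g \<otimes> y)) *\<^sub>v v)) * (R (g \<otimes> y) *\<^sub>v u) $ i)"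
    using sum_lmult[OF g, of "\<lambda>x. (w \<bullet>c (R (inv g \<otimes> x) *\<^sub>v v)) * (R x *\<^sub>v u) $ i"] by simp
  also have "\<dots> = (\<Sum>y\<in>carrier G. (w \<bullet>c (R y *\<^sub>v v)) * (R g *\<^sub>v (R y *\<^sub>v u)) $ i)"
  proof (rule sum.cong[OF refl])
    fix y assume y: "y \<in> carrier G"
    have "R (g \<otimes> y) *\<^sub>v u = R g *\<^sub>v (R y *\<^sub>v u)"
      using Rmul[OF g y] assoc_mult_mat_vec[OF Rc[OF g] Rc[OF y] u] by simp
    moreover have "inv g \<otimes> (g \<otimes> y) = y" using g y by (simp add: m_assoc[symmetric])
    ultimately show "(w \<bullet>c (R (inv g \<otimes> (g \<otimes> y)) *\<^sub>v v)) * (R (g \<otimes> y) *\<^sub>v u) $ i = (w \<bullet>c (R y *\<^sub>v v)) * (R g *\<^sub>v (R y *\<^sub>v u)) $ i"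
      by simp
  qed
  also have "\<dots> = (R g *\<^sub>v S u v w) $ i"
    unfolding S_def by (rule matvec_vsum[symmetric, OF Rc[OF g] i]) (use u in simp)
  finally show "S u v (R g *\<^sub>v w) $ i = (R g *\<^sub>v S u v w) $ i" .
qed

lemma S_scalar: assumes u: "u \<in> carrier_vec d" and v: "v \<in> carrier_vec d"
  shows "\<exists>c. \<forall>w\<in>carrier_vec d. S u v w = c \<cdot>\<^sub>v w"
proof -
  have C: "SM u v \<in> carrier_mat d d" unfolding SM_def by simp
  have "\<exists>c. \<forall>w\<in>carrier_vec d. SM u v *\<^sub>v w = c \<cdot>\<^sub>v w"
    by (rule schur[OF C]) (simp add: SM_S S_comm u v Rc)
  thus ?thesis using SM_S by auto
qed

definition mu where "mu u v = (SOME c. \<forall>w\<in>carrier_vec d. S u v w = c \<cdot>\<^sub>v w)"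

lemma S_mu: "u \<in> carrier_vec d \<Longrightarrow> v \<in> carrier_vec d \<Longrightarrow> w \<in> carrier_vec d \<Longrightarrow> S u v w = mu u v \<cdot>\<^sub>v w"
  unfolding mu_def using someI_ex[OF S_scalar] by blast

lemma S_swap: assumes u: "u \<in> carrier_vec d" and v: "v \<in> carrier_vec d" and w: "w \<in> carrier_vec d" and z: "z \<in> carrier_vec d"
  shows "S u v w \<bullet>c z = S w z u \<bullet>c v"
proof -
  interpret group G by (rule grp)
  have "S u v w \<bullet>c z = (\<Sum>x\<in>carrier G. (w \<bullet>c (R x *\<^sub>v v)) * ((R x *\<^sub>v u) \<bullet>c z))"
    by (rule S_inner[OF u z])
  also have "\<dots> = (\<Sum>y\<in>carrier G. (w \<bullet>c (R (inv y) *\<^sub>v v)) * ((R (inv y) *\<^sub>v u) \<bullet>c z))"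
    using sum_inv[of "\<lambda>x. (w \<bullet>c (R x *\<^sub>v v)) * ((R x *\<^sub>v u) \<bullet>c z)"] by simp
  also have "\<dots> = (\<Sum>y\<in>carrier G. (u \<bullet>c (R y *\<^sub>v z)) * ((R y *\<^sub>v w) \<bullet>c v))"
  proof (rule sum.cong[OF refl])
    fix y assume y: "y \<in> carrier G"
    have RA: "R (inv y) = mat_adjoint (R y)" by (rule Rinv[OF y])
    have AC: "mat_adjoint (R y) \<in> carrier_mat d d" by (rule adjc[OF Rc[OF y]])
    have 1: "w \<bullet>c (R (inv y) *\<^sub>v v) = (R y *\<^sub>v w) \<bullet>c v"
      unfolding RA by (rule inner_adj[symmetric]) (use Rc y w v in auto)
    have "(R (inv y) *\<^sub>v u) \<bullet>c z = cnj (z \<bullet>c (mat_adjoint (R y) *\<^sub>v u))"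
      unfolding RA by (rule cinner_sym) (use AC u z in auto)
    also have "\<dots> = cnj ((R y *\<^sub>v z) \<bullet>c u)"
      by (subst inner_adj) (use Rc y z u in auto)
    also have "\<dots> = u \<bullet>c (R y *\<^sub>v z)"
      by (rule cinner_sym[symmetric]) (use Rc y z u in auto)
    finally show "(w \<bullet>c (R (inv y) *\<^sub>v v)) * ((R (inv y) *\<^sub>v u) \<bullet>c z) = (u \<bullet>c (R y *\<^sub>v z)) * ((R y *\<^sub>v w) \<bullet>c v)"
      using 1 by (simp add: mult.commute)
  qed
  also have "\<dots> = S w z u \<bullet>c v" by (rule S_inner[OF w v, symmetric])
  finally show ?thesis .
qed

definition e0 :: "complex vec" where "e0 = unit_vec d 0"
definition c0 where "c0 = mu e0 e0"

lemma e0: "e0 \<in> carrier_vec d" "e0 \<bullet>c e0 = 1"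
proof -
  show "e0 \<in> carrier_vec d" unfolding e0_def by simp
  have "e0 \<bullet>c e0 = (\<Sum>i = 0..<d. (if i = 0 then 1 else 0) * conjugate (if i = (0::nat) then 1 else (0::complex)))"
    unfolding e0_def by (simp add: scalar_prod_def unit_vec_def)
  also have "\<dots> = (\<Sum>i = 0..<d. if i = 0 then 1 else 0)" by (rule sum.cong) auto
  finally show "e0 \<bullet>c e0 = 1" using dpos by simp
qed

lemma S_c0: assumes u: "u \<in> carrier_vec d" and v: "v \<in> carrier_vec d" and w: "w \<in> carrier_vec d"
  shows "S u v w = (c0 * (u \<bullet>c v)) \<cdot>\<^sub>v w"
proof -
  have h: "S u v e0 \<bullet>c e0 = mu u v * (e0 \<bullet>c e0)" using S_mu[OF u v e0(1)] inner_smult_left[OF e0(1) e0(1), of "mu u v"] by simp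
  have "mu u v = S u v e0 \<bullet>c e0" by (simp only: h e0(2) mult_1_right)
  also have "\<dots> = S e0 e0 u \<bullet>c v" by (rule S_swap) (use u v e0 in auto)
  also have "\<dots> = c0 * (u \<bullet>c v)" unfolding c0_def using S_mu[OF e0(1) e0(1) u] inner_smult_left u v by simp
  finally show ?thesis using S_mu[OF u v w] by simp
qed

lemma c0_nz: "c0 \<noteq> 0"
proof
  interpret group G by (rule grp)
  assume c: "c0 = 0"
  have "S e0 e0 e0 \<bullet>c e0 = 0" using S_c0[OF e0(1) e0(1) e0(1)] c e0 by (simp add: inner_smult_left)
  moreover have "S e0 e0 e0 \<bullet>c e0 = (\<Sum>x\<in>carrier G. of_real ((cmod (e0 \<bullet>c (R x *\<^sub>v e0)))\<^sup>2))"
  proof -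
    have "S e0 e0 e0 \<bullet>c e0 = (\<Sum>x\<in>carrier G. (e0 \<bullet>c (R x *\<^sub>v e0)) * ((R x *\<^sub>v e0) \<bullet>c e0))"
      by (rule S_inner) (use e0 in auto)
    also have "\<dots> = (\<Sum>x\<in>carrier G. of_real ((cmod (e0 \<bullet>c (R x *\<^sub>v e0)))\<^sup>2))"
    proof (rule sum.cong[OF refl])
      fix x assume x: "x \<in> carrier G"
      have "(R x *\<^sub>v e0) \<bullet>c e0 = cnj (e0 \<bullet>c (R x *\<^sub>v e0))" by (rule cinner_sym) (use x e0 in auto)
      thus "(e0 \<bullet>c (R x *\<^sub>v e0)) * ((R x *\<^sub>v e0) \<bullet>c e0) = of_real ((cmod (e0 \<bullet>c (R x *\<^sub>v e0)))\<^sup>2)"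
        by (simp only: complex_norm_square)
    qed
    finally show ?thesis .
  qed
  moreover have "(\<Sum>x\<in>carrier G. (cmod (e0 \<bullet>c (R x *\<^sub>v e0)))\<^sup>2) \<ge> (cmod (e0 \<bullet>c (R \<one> *\<^sub>v e0)))\<^sup>2"
    by (rule member_le_sum) (use fin in auto)
  moreover have "e0 \<bullet>c (R \<one> *\<^sub>v e0) = 1" using R1 e0 by simp
  ultimately have "(\<Sum>x\<in>carrier G. (cmod (e0 \<bullet>c (R x *\<^sub>v e0)))\<^sup>2) = 0"
    by (metis of_real_eq_0_iff of_real_sum)
  moreover note \<open>(\<Sum>x\<in>carrier G. (cmod (e0 \<bullet>c (R x *\<^sub>v e0)))\<^sup>2) \<ge> (cmod (e0 \<bullet>c (R \<one> *\<^sub>v e0)))\<^sup>2\<close>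
  ultimately show False using \<open>e0 \<bullet>c (R \<one> *\<^sub>v e0) = 1\<close> by simp
qed

end



context urep begin

lemma inner_self_nz: assumes v: "(v::complex vec) \<in> carrier_vec d" and nz: "v \<noteq> 0\<^sub>v d"
  shows "v \<bullet>c v \<noteq> 0"
proof
  assume z: "v \<bullet>c v = 0"
  have "v \<bullet>c v = (\<Sum>i<d. v $ i * cnj (v $ i))"
    using v by (simp add: scalar_prod_def lessThan_atLeast0)
  also have "\<dots> = (\<Sum>i<d. of_real ((cmod (v $ i))\<^sup>2))" by (simp only: complex_norm_square)
  finally have "v \<bullet>c v = (\<Sum>i<d. of_real ((cmod (v $ i))\<^sup>2))" .
  hence "(\<Sum>i<d. (cmod (v $ i))\<^sup>2) = 0" using z by (metis of_real_eq_0_iff of_real_sum)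
  hence "\<forall>i\<in>{..<d}. (cmod (v $ i))\<^sup>2 = 0" by (subst (asm) sum_nonneg_eq_0_iff) auto
  hence "v = 0\<^sub>v d" using v by (auto intro!: eq_vecI)
  thus False using nz by simp
qed

lemma inner_unit: assumes v: "(v::complex vec) \<in> carrier_vec d" and i: "i < d"
  shows "v \<bullet>c unit_vec d i = v $ i" "unit_vec d i \<bullet>c v = cnj (v $ i)"
proof -
  have cu: "conjugate (unit_vec d i) = (unit_vec d i :: complex vec)" by (auto simp: unit_vec_def intro!: eq_vecI)
  show "v \<bullet>c unit_vec d i = v $ i" unfolding cu using i by simp
  show "unit_vec d i \<bullet>c v = cnj (v $ i)" using v i by simp
qed

definition T :: "complex vec \<Rightarrow> complex vec \<Rightarrow> 'a \<Rightarrow> complex" where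
  "T v w = (\<lambda>s. if s \<in> carrier G then w \<bullet>c (R s *\<^sub>v v) else 0)"

definition lam :: "complex vec \<Rightarrow> complex" where "lam v = c0 * (v \<bullet>c v)"

definition W :: "complex vec \<Rightarrow> ('a \<Rightarrow> complex) \<Rightarrow> complex vec" where
  "W v f = (1 / lam v) \<cdot>\<^sub>v vec d (\<lambda>i. \<Sum>x\<in>carrier G. f x * (R x *\<^sub>v v) $ i)"

lemma W_carrier[simp]: "W v f \<in> carrier_vec d" unfolding W_def by simp

lemma lam_nz: "v \<in> carrier_vec d \<Longrightarrow> v \<noteq> 0\<^sub>v d \<Longrightarrow> lam v \<noteq> 0"
  unfolding lam_def using c0_nz inner_self_nz by simp

lemma T_L2: "T v w \<in> L2 G" unfolding T_def L2_def by simp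

lemma T_smult: "v \<in> carrier_vec d \<Longrightarrow> w \<in> carrier_vec d \<Longrightarrow> T v (k \<cdot>\<^sub>v w) = (\<lambda>s. k * T v w s)"
  unfolding T_def by (auto simp: inner_smult_left)

lemma S_T: "u \<in> carrier_vec d \<Longrightarrow> v \<in> carrier_vec d \<Longrightarrow> w \<in> carrier_vec d \<Longrightarrow>
   S u v w = vec d (\<lambda>i. \<Sum>x\<in>carrier G. T v w x * (R x *\<^sub>v u) $ i)"
  unfolding S_def T_def by (auto intro!: eq_vecI sum.cong)

lemma W_T: assumes v: "v \<in> carrier_vec d" "v \<noteq> 0\<^sub>v d" and w: "w \<in> carrier_vec d"
  shows "W v (T v w) = w"
proof -
  have "W v (T v w) = (1 / lam v) \<cdot>\<^sub>v S v v w" unfolding W_def using S_T v w by simp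
  also have "\<dots> = w" using S_c0[OF v(1) v(1) w] lam_nz[OF v] w unfolding lam_def
    by (auto simp: smult_smult_assoc)
  finally show ?thesis .
qed

lemma l2_T: assumes v: "v \<in> carrier_vec d" and vnz: "v \<noteq> 0\<^sub>v d" and w: "w \<in> carrier_vec d"
  shows "l2_inner G f (T v w) = lam v * (W v f \<bullet>c w)"
proof -
  have "l2_inner G f (T v w) = (\<Sum>x\<in>carrier G. f x * ((R x *\<^sub>v v) \<bullet>c w))"
    unfolding l2_inner_def T_def by (intro sum.cong refl) (use v w in \<open>simp add: cinner_sym[of w]\<close>)
  also have "\<dots> = vec d (\<lambda>i. \<Sum>x\<in>carrier G. f x * (R x *\<^sub>v v) $ i) \<bullet>c w"
    by (rule inner_vsum_left[symmetric]) (use v w in auto)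
  also have "\<dots> = lam v * (W v f \<bullet>c w)"
    unfolding W_def using lam_nz[OF v vnz] w v by (subst inner_smult_left) auto
  finally show ?thesis .
qed

lemma T_in: assumes v: "v \<in> carrier_vec d" "v \<noteq> 0\<^sub>v d" and w: "w \<in> carrier_vec d"
  shows "T v w \<in> gram_colspace G R v"
  unfolding gram_colspace_def
proof (intro CollectI exI[of _ "\<lambda>g2. (w \<bullet>c (R g2 *\<^sub>v v)) / lam v"] allI)
  fix g1
  show "T v w g1 = (if g1 \<in> carrier G then \<Sum>g2\<in>carrier G. gram R v g1 g2 * ((w \<bullet>c (R g2 *\<^sub>v v)) / lam v) else 0)"
  proof (cases "g1 \<in> carrier G")
    case True
    have "(\<Sum>g2\<in>carrier G. gram R v g1 g2 * ((w \<bullet>c (R g2 *\<^sub>v v)) / lam v))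
        = (1 / lam v) * (\<Sum>g2\<in>carrier G. (w \<bullet>c (R g2 *\<^sub>v v)) * ((R g2 *\<^sub>v v) \<bullet>c (R g1 *\<^sub>v v)))"
      unfolding gram_def sum_distrib_left by (intro sum.cong refl) simp
    also have "\<dots> = (1 / lam v) * (S v v w \<bullet>c (R g1 *\<^sub>v v))"
      using S_inner[of v "R g1 *\<^sub>v v" v w] v True by simp
    also have "\<dots> = w \<bullet>c (R g1 *\<^sub>v v)"
      using S_c0[OF v(1) v(1) w] lam_nz[OF v] True v w unfolding lam_def by (simp add: inner_smult_left)
    finally show ?thesis using True unfolding T_def by simp
  qed (simp add: T_def)
qed

lemma colspace_T: assumes v: "v \<in> carrier_vec d" and f: "f \<in> gram_colspace G R v"
  shows "\<exists>w\<in>carrier_vec d. f = T v w"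
proof -
  from f obtain c where c: "\<And>g1. f g1 = (if g1 \<in> carrier G then (\<Sum>g2\<in>carrier G. gram R v g1 g2 * c g2) else 0)"
    unfolding gram_colspace_def by auto
  define w where "w = vec d (\<lambda>i. \<Sum>g2\<in>carrier G. c g2 * (R g2 *\<^sub>v v) $ i)"
  have "f = T v w"
  proof
    fix g1 show "f g1 = T v w g1"
    proof (cases "g1 \<in> carrier G")
      case True
      have "w \<bullet>c (R g1 *\<^sub>v v) = (\<Sum>g2\<in>carrier G. c g2 * ((R g2 *\<^sub>v v) \<bullet>c (R g1 *\<^sub>v v)))"
        unfolding w_def by (rule inner_vsum_left) (use v True in auto)
      thus ?thesis using True c[of g1] unfolding T_def gram_def by (simp add: mult.commute)
    qed (simp add: c T_def)
  qed
  thus ?thesis unfolding w_def by auto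
qed

lemma l2_diff: "l2_inner G (\<lambda>x. f x - p x) h = l2_inner G f h - l2_inner G p h"
  unfolding l2_inner_def by (simp add: sum_subtractf left_diff_distrib)

lemma orth: assumes v: "v \<in> carrier_vec d" "v \<noteq> 0\<^sub>v d" and w: "w \<in> carrier_vec d"
  shows "l2_inner G (\<lambda>x. f x - T v (W v f) x) (T v w) = 0"
  unfolding l2_diff using l2_T[OF v w] W_T[OF v W_carrier] by simp

lemma proj: assumes v: "v \<in> carrier_vec d" "v \<noteq> 0\<^sub>v d"
  shows "orth_proj G (gram_colspace G R v) f = T v (W v f)"
  unfolding orth_proj_def
proof (rule the_equality)
  show "T v (W v f) \<in> gram_colspace G R v \<and> (\<forall>h\<in>gram_colspace G R v. l2_inner G (\<lambda>x. f x - T v (W v f) x) h = 0)"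
    using T_in[OF v W_carrier] colspace_T[OF v(1)] orth[OF v] by blast
next
  fix p assume p: "p \<in> gram_colspace G R v \<and> (\<forall>h\<in>gram_colspace G R v. l2_inner G (\<lambda>x. f x - p x) h = 0)"
  then obtain wp where wp: "wp \<in> carrier_vec d" "p = T v wp" using colspace_T[OF v(1)] by blast
  have eq: "W v f \<bullet>c w = wp \<bullet>c w" if w: "w \<in> carrier_vec d" for w
  proof -
    have "l2_inner G (\<lambda>x. f x - p x) (T v w) = 0" using p T_in[OF v w] by blast
    hence "lam v * (W v f \<bullet>c w) - lam v * (wp \<bullet>c w) = 0"
      unfolding l2_diff using l2_T[OF v w] W_T[OF v wp(1)] wp(2) by simp
    thus ?thesis using lam_nz[OF v] by (simp add: right_diff_distrib[symmetric])
  qed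
  have "wp = W v f"
  proof (rule eq_vecI)
    fix i assume "i < dim_vec (W v f)"
    hence i: "i < d" unfolding W_def by simp
    show "wp $ i = W v f $ i" using eq[of "unit_vec d i"] inner_unit(1)[OF wp(1) i] inner_unit(1)[OF W_carrier i] by simp
  qed (use wp in \<open>simp add: W_def\<close>)
  thus "p = T v (W v f)" using wp by simp
qed

lemma LT: assumes x: "x \<in> carrier G" and v: "v \<in> carrier_vec d" and w: "w \<in> carrier_vec d"
  shows "left_reg G x (T v w) = T v (R x *\<^sub>v w)"
proof
  interpret group G by (rule grp)
  fix s
  show "left_reg G x (T v w) s = T v (R x *\<^sub>v w) s"
  proof (cases "s \<in> carrier G")
    case True
    have "(\<Sum>y\<in>carrier G. delta G x y * T v w (inv y \<otimes> s)) = (\<Sum>y\<in>carrier G. if y = x then T v w (inv y \<otimes> s) else 0)"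
      unfolding delta_def by (intro sum.cong) auto
    also have "\<dots> = T v w (inv x \<otimes> s)" using fin x by simp
    also have "\<dots> = w \<bullet>c (mat_adjoint (R x) *\<^sub>v (R s *\<^sub>v v))"
      unfolding T_def using x True Rmul[of "inv x" s] Rinv[OF x] assoc_mult_mat_vec[OF adjc[OF Rc[OF x]] Rc[OF True] v] by simp
    also have "\<dots> = (R x *\<^sub>v w) \<bullet>c (R s *\<^sub>v v)"
      by (rule inner_adj[symmetric]) (use x True v w Rc in auto)
    finally show ?thesis unfolding left_reg_def conv_def T_def using True by simp
  qed (simp add: left_reg_def conv_def T_def)
qed

lemma decomp: assumes v: "v \<in> carrier_vec d" "v \<noteq> 0\<^sub>v d" and w: "w \<in> carrier_vec d"
  shows "T v w = (\<lambda>s. \<Sum>x\<in>carrier G. ((w \<bullet>c (R x *\<^sub>v v)) / lam v) * left_reg G x (T v v) s)"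
proof
  fix s
  have "(\<Sum>x\<in>carrier G. ((w \<bullet>c (R x *\<^sub>v v)) / lam v) * left_reg G x (T v v) s)
      = (\<Sum>x\<in>carrier G. ((w \<bullet>c (R x *\<^sub>v v)) / lam v) * T v (R x *\<^sub>v v) s)"
    using LT v by (intro sum.cong) auto
  also have "\<dots> = T v w s"
  proof (cases "s \<in> carrier G")
    case True
    have "(\<Sum>x\<in>carrier G. ((w \<bullet>c (R x *\<^sub>v v)) / lam v) * T v (R x *\<^sub>v v) s)
       = (1 / lam v) * (\<Sum>x\<in>carrier G. (w \<bullet>c (R x *\<^sub>v v)) * ((R x *\<^sub>v v) \<bullet>c (R s *\<^sub>v v)))"
      unfolding T_def sum_distrib_left using True by (intro sum.cong refl) simp
    also have "\<dots> = (1 / lam v) * (S v v w \<bullet>c (R s *\<^sub>v v))"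
      using S_inner[of v "R s *\<^sub>v v" v w] v True by simp
    also have "\<dots> = T v w s"
      using S_c0[OF v(1) v(1) w] lam_nz[OF v] True v w unfolding lam_def T_def by (simp add: inner_smult_left)
    finally show ?thesis .
  qed (simp add: T_def)
  finally show "T v w s = (\<Sum>x\<in>carrier G. ((w \<bullet>c (R x *\<^sub>v v)) / lam v) * left_reg G x (T v v) s)" ..
qed

end



context urep begin

lemma char_inv: assumes x: "x \<in> carrier G" and t: "t \<in> carrier G"
  shows "cnj (character d R (inv x \<otimes> t)) = (\<Sum>i<d. \<Sum>k<d. R x $$ (k,i) * cnj (R t $$ (k,i)))"
proof -
  interpret group G by (rule grp)
  have RR: "R (inv x \<otimes> t) = mat_adjoint (R x) * R t" using Rmul[of "inv x" t] x t Rinv[OF x] by simp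
  have "character d R (inv x \<otimes> t) = (\<Sum>i<d. \<Sum>k<d. cnj (R x $$ (k,i)) * R t $$ (k,i))"
    unfolding character_def RR
  proof (intro sum.cong refl)
    fix i assume "i \<in> {..<d}" hence i: "i < d" by simp
    have AC: "mat_adjoint (R x) \<in> carrier_mat d d" by (rule adjc[OF Rc[OF x]])
    show "(mat_adjoint (R x) * R t) $$ (i, i) = (\<Sum>k<d. cnj (R x $$ (k, i)) * R t $$ (k, i))"
      using AC Rc[OF t] Rc[OF x] i by (auto simp: scalar_prod_def lessThan_atLeast0 adj_entry intro!: sum.cong)
  qed
  thus ?thesis by simp
qed

lemma A_T: assumes a: "a \<in> carrier G" and v1: "v1 \<in> carrier_vec d" and w: "w \<in> carrier_vec d"
  shows "A_op G (character d R) a (T v1 w) = (\<lambda>s. c0 * T (R a *\<^sub>v v1) w s)"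
proof
  interpret group G by (rule grp)
  fix s
  show "A_op G (character d R) a (T v1 w) s = c0 * T (R a *\<^sub>v v1) w s"
  proof (cases "s \<in> carrier G")
    case s: True
    define t where "t = s \<otimes> a"
    have t: "t \<in> carrier G" unfolding t_def using s a by simp
    define f where "f x = w \<bullet>c (R x *\<^sub>v v1)" for x
    have "A_op G (character d R) a (T v1 w) s = (\<Sum>x\<in>carrier G. f x * cnj (character d R (inv x \<otimes> t)))"
      unfolding A_op_def conv_def T_def f_def t_def using s a by (auto simp: m_assoc intro!: sum.cong)
    also have "\<dots> = (\<Sum>x\<in>carrier G. \<Sum>i<d. \<Sum>k<d. f x * (R x $$ (k,i) * cnj (R t $$ (k,i))))"
      using char_inv t by (simp add: sum_distrib_left)
    also have "\<dots> = (\<Sum>i<d. \<Sum>x\<in>carrier G. \<Sum>k<d. f x * (R x $$ (k,i) * cnj (R t $$ (k,i))))"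
      by (rule sum.swap)
    also have "\<dots> = (\<Sum>i<d. \<Sum>k<d. \<Sum>x\<in>carrier G. f x * (R x $$ (k,i) * cnj (R t $$ (k,i))))"
      by (intro sum.cong refl sum.swap)
    also have "\<dots> = (\<Sum>i<d. \<Sum>k<d. cnj (R t $$ (k,i)) * S (unit_vec d i) v1 w $ k)"
    proof (intro sum.cong refl)
      fix i k assume i: "i \<in> {..<d}" and k: "k \<in> {..<d}"
      have "S (unit_vec d i) v1 w $ k = (\<Sum>x\<in>carrier G. f x * R x $$ (k,i))"
        unfolding S_def f_def using i k by (auto intro!: sum.cong)
      thus "(\<Sum>x\<in>carrier G. f x * (R x $$ (k,i) * cnj (R t $$ (k,i)))) = cnj (R t $$ (k,i)) * S (unit_vec d i) v1 w $ k"
        by (simp add: sum_distrib_left sum_distrib_right mult_ac)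
    qed
    also have "\<dots> = (\<Sum>i<d. \<Sum>k<d. cnj (R t $$ (k,i)) * (c0 * cnj (v1 $ i) * w $ k))"
    proof (intro sum.cong refl)
      fix i k assume i: "i \<in> {..<d}" and k: "k \<in> {..<d}"
      have "S (unit_vec d i) v1 w = (c0 * (unit_vec d i \<bullet>c v1)) \<cdot>\<^sub>v w" by (rule S_c0) (use v1 w in auto)
      thus "cnj (R t $$ (k,i)) * S (unit_vec d i) v1 w $ k = cnj (R t $$ (k,i)) * (c0 * cnj (v1 $ i) * w $ k)"
        using inner_unit(2)[OF v1, of i] i k w by simp
    qed
    also have "\<dots> = (\<Sum>k<d. \<Sum>i<d. cnj (R t $$ (k,i)) * (c0 * cnj (v1 $ i) * w $ k))"
      by (rule sum.swap)
    also have "\<dots> = c0 * (\<Sum>k<d. w $ k * cnj (\<Sum>i<d. R t $$ (k,i) * v1 $ i))"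
      by (simp add: sum_distrib_left sum_distrib_right mult_ac)
    also have "\<dots> = c0 * (w \<bullet>c (R t *\<^sub>v v1))"
      using w v1 Rc[OF t] by (simp add: scalar_prod_def lessThan_atLeast0)
    also have "\<dots> = c0 * T (R a *\<^sub>v v1) w s"
      unfolding T_def t_def using s a Rmul[OF s a] assoc_mult_mat_vec[OF Rc[OF s] Rc[OF a] v1] by simp
    finally show ?thesis .
  qed (simp add: A_op_def conv_def T_def)
qed

lemma W_scaledT: assumes v: "v \<in> carrier_vec d" and u: "u \<in> carrier_vec d" and w: "w \<in> carrier_vec d"
  shows "W v (\<lambda>s. k * T u w s) = (k * c0 * (v \<bullet>c u) / lam v) \<cdot>\<^sub>v w"
proof (rule eq_vecI)
  fix i assume "i < dim_vec ((k * c0 * (v \<bullet>c u) / lam v) \<cdot>\<^sub>v w)"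
  hence i: "i < d" using w by simp
  have "W v (\<lambda>s. k * T u w s) $ i = (1 / lam v) * k * (\<Sum>x\<in>carrier G. T u w x * (R x *\<^sub>v v) $ i)"
    unfolding W_def using i by (simp add: sum_distrib_left mult_ac)
  also have "\<dots> = (1 / lam v) * k * S v u w $ i" using S_T[OF v u w] i by simp
  also have "\<dots> = ((k * c0 * (v \<bullet>c u) / lam v) \<cdot>\<^sub>v w) $ i" using S_c0[OF v u w] i w by simp
  finally show "W v (\<lambda>s. k * T u w s) $ i = ((k * c0 * (v \<bullet>c u) / lam v) \<cdot>\<^sub>v w) $ i" .
qed (use w in \<open>simp add: W_def\<close>)

lemma left_reg_L2: "left_reg G x h \<in> L2 G" unfolding left_reg_def conv_def L2_def by simp

end



locale mctx = urep +
  fixes v1 v2 :: "complex vec" and M :: "('a \<Rightarrow> complex) \<Rightarrow> 'a \<Rightarrow> complex"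
  assumes v1: "v1 \<in> carrier_vec d" "v1 \<noteq> 0\<^sub>v d"
    and v2: "v2 \<in> carrier_vec d" "v2 \<noteq> 0\<^sub>v d"
    and M_L2: "\<And>f. f \<in> L2 G \<Longrightarrow> M f \<in> L2 G"
    and M_add: "\<And>f h. f \<in> L2 G \<Longrightarrow> h \<in> L2 G \<Longrightarrow> M (\<lambda>x. f x + h x) = (\<lambda>x. M f x + M h x)"
    and M_scale: "\<And>c f. f \<in> L2 G \<Longrightarrow> M (\<lambda>x. c * f x) = (\<lambda>x. c * M f x)"
    and M_onto: "M ` gram_colspace G R v1 = gram_colspace G R v2"
    and M_perp: "\<And>f. f \<in> L2 G \<Longrightarrow> (\<forall>w\<in>gram_colspace G R v1. l2_inner G f w = 0) \<Longrightarrow> M f = (\<lambda>x. 0)"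
    and M_Glin: "\<And>g f. g \<in> carrier G \<Longrightarrow> f \<in> L2 G \<Longrightarrow> M (left_reg G g f) = left_reg G g (M f)"
begin

lemma M_zero: "M (\<lambda>x. 0) = (\<lambda>x. 0)"
  using M_scale[of "\<lambda>x. 0" 0] by (simp add: L2_def)

lemma M_sum: assumes "finite A" and h: "\<And>x. x \<in> A \<Longrightarrow> h x \<in> L2 G"
  shows "M (\<lambda>s. \<Sum>x\<in>A. a x * h x s) = (\<lambda>s. \<Sum>x\<in>A. a x * M (h x) s)"
  using assms
proof (induction A rule: finite_induct)
  case empty thus ?case using M_zero by simp
next
  case (insert y F)
  have hy: "h y \<in> L2 G" using insert by simp
  have L1: "(\<lambda>s. a y * h y s) \<in> L2 G" using hy unfolding L2_def by simp
  have L2s: "(\<lambda>s. \<Sum>x\<in>F. a x * h x s) \<in> L2 G" using insert.prems unfolding L2_def by simp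
  have "M (\<lambda>s. \<Sum>x\<in>insert y F. a x * h x s) = M (\<lambda>s. a y * h y s + (\<Sum>x\<in>F. a x * h x s))"
    using insert by simp
  also have "\<dots> = (\<lambda>s. M (\<lambda>s. a y * h y s) s + M (\<lambda>s. \<Sum>x\<in>F. a x * h x s) s)"
    by (rule M_add[OF L1 L2s])
  also have "\<dots> = (\<lambda>s. \<Sum>x\<in>insert y F. a x * M (h x) s)"
    using insert M_scale[OF hy] by simp
  finally show ?case .
qed

lemma M_T: "\<exists>\<nu>. \<forall>w\<in>carrier_vec d. M (T v1 w) = (\<lambda>s. \<nu> * T v2 w s)"
proof -
  have "M (T v1 v1) \<in> gram_colspace G R v2" using M_onto T_in[OF v1 v1(1)] by blast
  then obtain w0 where w0: "w0 \<in> carrier_vec d" "M (T v1 v1) = T v2 w0" using colspace_T[OF v2(1)] by blast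
  have "M (T v1 w) = (\<lambda>s. (c0 * (w0 \<bullet>c v1) / lam v1) * T v2 w s)" if w: "w \<in> carrier_vec d" for w
  proof -
    have "M (T v1 w) = M (\<lambda>s. \<Sum>x\<in>carrier G. ((w \<bullet>c (R x *\<^sub>v v1)) / lam v1) * left_reg G x (T v1 v1) s)"
      using decomp[OF v1 w] by simp
    also have "\<dots> = (\<lambda>s. \<Sum>x\<in>carrier G. ((w \<bullet>c (R x *\<^sub>v v1)) / lam v1) * M (left_reg G x (T v1 v1)) s)"
      by (rule M_sum) (use fin left_reg_L2 in auto)
    also have "\<dots> = (\<lambda>s. \<Sum>x\<in>carrier G. ((w \<bullet>c (R x *\<^sub>v v1)) / lam v1) * T v2 (R x *\<^sub>v w0) s)"
      using M_Glin T_L2 w0 LT v2 by (intro ext sum.cong refl) simp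
    also have "\<dots> = (\<lambda>s. (c0 * (w0 \<bullet>c v1) / lam v1) * T v2 w s)"
    proof
      fix s show "(\<Sum>x\<in>carrier G. ((w \<bullet>c (R x *\<^sub>v v1)) / lam v1) * T v2 (R x *\<^sub>v w0) s) = (c0 * (w0 \<bullet>c v1) / lam v1) * T v2 w s"
      proof (cases "s \<in> carrier G")
        case True
        have "(\<Sum>x\<in>carrier G. ((w \<bullet>c (R x *\<^sub>v v1)) / lam v1) * T v2 (R x *\<^sub>v w0) s)
           = (1 / lam v1) * (\<Sum>x\<in>carrier G. (w \<bullet>c (R x *\<^sub>v v1)) * ((R x *\<^sub>v w0) \<bullet>c (R s *\<^sub>v v2)))"
          unfolding T_def sum_distrib_left using True by (intro sum.cong refl) simp
        also have "\<dots> = (1 / lam v1) * (S w0 v1 w \<bullet>c (R s *\<^sub>v v2))"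
          using S_inner[of w0 "R s *\<^sub>v v2" v1 w] w0 v2 True by simp
        also have "\<dots> = (c0 * (w0 \<bullet>c v1) / lam v1) * T v2 w s"
          using S_c0[OF w0(1) v1(1) w] True v2 w unfolding T_def by (simp add: inner_smult_left)
        finally show ?thesis .
      qed (simp add: T_def)
    qed
    finally show ?thesis .
  qed
  thus ?thesis by blast
qed

definition nu where "nu = (SOME \<nu>. \<forall>w\<in>carrier_vec d. M (T v1 w) = (\<lambda>s. \<nu> * T v2 w s))"

lemma M_T_nu: "w \<in> carrier_vec d \<Longrightarrow> M (T v1 w) = (\<lambda>s. nu * T v2 w s)"
  unfolding nu_def using someI_ex[OF M_T] by blast

lemma nu_nz: "nu \<noteq> 0"
proof
  assume z: "nu = 0"
  have "T v2 v2 \<in> gram_colspace G R v2" by (rule T_in[OF v2 v2(1)])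
  then obtain h where h: "h \<in> gram_colspace G R v1" "T v2 v2 = M h" using M_onto by blast
  then obtain w where w: "w \<in> carrier_vec d" "h = T v1 w" using colspace_T[OF v1(1)] by blast
  have "T v2 v2 = (\<lambda>s. 0)" using h w M_T_nu z by simp
  hence "T v2 v2 \<one>\<^bsub>G\<^esub> = 0" by simp
  moreover have "T v2 v2 \<one>\<^bsub>G\<^esub> = v2 \<bullet>c v2" unfolding T_def using R1 v2 grp by (simp add: group.is_monoid monoid.one_closed)
  ultimately show False using inner_self_nz[OF v2] by simp
qed

lemma M_f: assumes f: "f \<in> L2 G" shows "M f = (\<lambda>s. nu * T v2 (W v1 f) s)"
proof -
  define p where "p = T v1 (W v1 f)"
  define q where "q = (\<lambda>x. f x - p x)"
  have pL: "p \<in> L2 G" unfolding p_def by (rule T_L2)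
  have qL: "q \<in> L2 G" using f pL unfolding q_def L2_def by simp
  have "f = (\<lambda>x. p x + q x)" unfolding q_def by simp
  hence "M f = (\<lambda>x. M p x + M q x)" using M_add[OF pL qL] by simp
  moreover have "M q = (\<lambda>x. 0)"
  proof (rule M_perp[OF qL], intro ballI)
    fix h assume "h \<in> gram_colspace G R v1"
    then obtain w where "w \<in> carrier_vec d" "h = T v1 w" using colspace_T[OF v1(1)] by blast
    thus "l2_inner G q h = 0" unfolding q_def p_def using orth[OF v1] by simp
  qed
  ultimately show ?thesis unfolding p_def using M_T_nu by simp
qed

lemma final: "\<exists>lm :: 'a \<Rightarrow> complex.
           (\<forall>a\<in>carrier G. \<forall>f\<in>L2 G.
              (\<lambda>x. lm a * M f x) = orth_proj G (gram_colspace G R v2) (A_op G (character d R) a (orth_proj G (gram_colspace G R v1) f)))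
         \<and> (\<exists>a\<in>carrier G. lm a \<noteq> 0)"
proof -
  define kap where "kap a = c0 * c0 * (v2 \<bullet>c (R a *\<^sub>v v1)) / lam v2" for a
  define lm where "lm a = kap a / nu" for a
  have P: "(\<lambda>x. lm a * M f x) = orth_proj G (gram_colspace G R v2) (A_op G (character d R) a (orth_proj G (gram_colspace G R v1) f))"
    if a: "a \<in> carrier G" and f: "f \<in> L2 G" for a f
  proof -
    have u: "R a *\<^sub>v v1 \<in> carrier_vec d" using a v1 by simp
    have "orth_proj G (gram_colspace G R v2) (A_op G (character d R) a (orth_proj G (gram_colspace G R v1) f))
       = T v2 (W v2 (\<lambda>s. c0 * T (R a *\<^sub>v v1) (W v1 f) s))"
      unfolding proj[OF v1] proj[OF v2] A_T[OF a v1(1) W_carrier] ..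
    also have "\<dots> = T v2 (kap a \<cdot>\<^sub>v W v1 f)"
      unfolding W_scaledT[OF v2(1) u W_carrier] kap_def by (simp add: mult_ac)
    also have "\<dots> = (\<lambda>s. kap a * T v2 (W v1 f) s)" by (rule T_smult[OF v2(1) W_carrier])
    also have "\<dots> = (\<lambda>x. lm a * M f x)" unfolding M_f[OF f] lm_def using nu_nz by simp
    finally show ?thesis ..
  qed
  have "\<exists>a\<in>carrier G. v2 \<bullet>c (R a *\<^sub>v v1) \<noteq> 0"
  proof (rule ccontr)
    assume "\<not> ?thesis"
    hence z: "\<And>a. a \<in> carrier G \<Longrightarrow> v2 \<bullet>c (R a *\<^sub>v v1) = 0" by blast
    have "S v1 v1 v2 \<bullet>c v2 = 0" using S_inner[of v1 v2 v1 v2] v1 v2 z by simp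
    moreover have "S v1 v1 v2 \<bullet>c v2 = c0 * (v1 \<bullet>c v1) * (v2 \<bullet>c v2)"
      using S_c0[OF v1(1) v1(1) v2(1)] v2 by (simp add: inner_smult_left)
    ultimately show False using c0_nz inner_self_nz[OF v1] inner_self_nz[OF v2] by simp
  qed
  then obtain a where a: "a \<in> carrier G" "v2 \<bullet>c (R a *\<^sub>v v1) \<noteq> 0" by blast
  have "lm a \<noteq> 0" unfolding lm_def kap_def using a c0_nz lam_nz[OF v2] nu_nz by simp
  thus ?thesis using P a by blast
qed

end


theorem mainTheorem4:
  fixes G :: "('a, 'b) monoid_scheme" and d :: nat and \<rho>' :: "'a \<Rightarrow> complex mat"
    and v1 v2 :: "complex vec" and M :: "('a \<Rightarrow> complex) \<Rightarrow> 'a \<Rightarrow> complex"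
  defines "\<chi> \<equiv> character d \<rho>'"
    and "V1 \<equiv> gram_colspace G \<rho>' v1"
    and "V2 \<equiv> gram_colspace G \<rho>' v2"
  assumes grp: "group G" and fin: "finite (carrier G)"
    and rep: "unitary_rep G d \<rho>'" and irr: "irreducible_rep G d \<rho>'"
    and v1: "v1 \<in> carrier_vec d" "v1 \<noteq> 0\<^sub>v d"
    and v2: "v2 \<in> carrier_vec d" "v2 \<noteq> 0\<^sub>v d"
    and M_L2: "\<And>f. f \<in> L2 G \<Longrightarrow> M f \<in> L2 G"
    and M_add: "\<And>f h. f \<in> L2 G \<Longrightarrow> h \<in> L2 G \<Longrightarrow> M (\<lambda>x. f x + h x) = (\<lambda>x. M f x + M h x)"
    and M_scale: "\<And>c f. f \<in> L2 G \<Longrightarrow> M (\<lambda>x. c * f x) = (\<lambda>x. c * M f x)"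
    and M_onto: "M ` V1 = V2"
    and M_isom: "\<And>f h. f \<in> V1 \<Longrightarrow> h \<in> V1 \<Longrightarrow> l2_inner G (M f) (M h) = l2_inner G f h"
    and M_perp: "\<And>f. f \<in> L2 G \<Longrightarrow> (\<forall>w\<in>V1. l2_inner G f w = 0) \<Longrightarrow> M f = (\<lambda>x. 0)"
    and M_Glin: "\<And>g f. g \<in> carrier G \<Longrightarrow> f \<in> L2 G \<Longrightarrow> M (left_reg G g f) = left_reg G g (M f)"
  shows "\<exists>lam :: 'a \<Rightarrow> complex.
           (\<forall>a\<in>carrier G. \<forall>f\<in>L2 G.
              (\<lambda>x. lam a * M f x) = orth_proj G V2 (A_op G \<chi> a (orth_proj G V1 f)))
         \<and> (\<exists>a\<in>carrier G. lam a \<noteq> 0)"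
  proof -
  have U: "urep G d \<rho>'" by (rule urep.intro[OF grp fin rep irr])
  have ax: "mctx_axioms G d \<rho>' v1 v2 M"
  proof (rule mctx_axioms.intro)
    show "\<And>f. f \<in> L2 G \<Longrightarrow> (\<forall>w\<in>gram_colspace G \<rho>' v1. l2_inner G f w = 0) \<Longrightarrow> M f = (\<lambda>x. 0)"
      using M_perp unfolding V1_def by blast
    show "M ` gram_colspace G \<rho>' v1 = gram_colspace G \<rho>' v2" using M_onto unfolding V1_def V2_def .
  qed (use v1 v2 M_L2 M_add M_scale M_Glin in auto)
  interpret mctx G d \<rho>' v1 v2 M by (rule mctx.intro[OF U ax])
  show ?thesis using final unfolding \<chi>_def V1_def V2_def .
qed

end
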